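(* Let $\alpha\ge1$. Any outcome that satisfies $\alpha$-proportional fairness is in the $\left(\gamma,\frac{\gamma(\alpha+1)}{\gamma-1}\right)$-transferable core for every $\gamma>1$.
   Context: Let $(\mathcal X,d)$ be a metric space, $N=[n]$ a set of agents and $C$ a set of candidates located in $\mathcal X$, $k\in\mathbb N^+$; an outcome is $W\subseteq C$ with $|W|\le k$; $d(i,W)=\min_{c\in W}d(i,c)$. $\alpha$-proportional fairness: there is no group $N'\subseteq N$ with $|N'|\ge n/k$ and candidate $c\in C\setminus W$ such that $\alpha\, d(i,c)<d(i,W)$ for all $i\in N'$. $(\gamma,\alpha)$-transferable core: $W$ is in it if there is no group $N'\subseteq N$ and candidate $c\in C\setminus W$ with $|N'|\ge\gamma n/k$ and $\alpha\sum_{i\in N'}d(i,c)<\sum_{i\in N'}d(i,W)$. *)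

theory Defs
  imports "HOL-Analysis.Analysis"
begin

text \<open>Agents are elements of a finite set N (of any type 'i), located by xa :: 'i => 'a;
 candidates are elements of a set C (of any type 'c), located by yc :: 'c => 'a;
 'a is a metric space with metric dist.\<close>

definition dist_ac :: "('i \<Rightarrow> 'a::metric_space) \<Rightarrow> ('c \<Rightarrow> 'a) \<Rightarrow> 'i \<Rightarrow> 'c \<Rightarrow> real" where
  "dist_ac xa yc i c = dist (xa i) (yc c)"

definition dist_set :: "('i \<Rightarrow> 'a::metric_space) \<Rightarrow> ('c \<Rightarrow> 'a) \<Rightarrow> 'i \<Rightarrow> 'c set \<Rightarrow> real" where
  "dist_set xa yc i W = Min ((\<lambda>c. dist_ac xa yc i c) ` W)"

definition is_outcome :: "'c set \<Rightarrow> nat \<Rightarrow> 'c set \<Rightarrow> bool" where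
  "is_outcome C k W \<longleftrightarrow> W \<subseteq> C \<and> finite W \<and> card W \<le> k"

definition proportionally_fair ::
  "real \<Rightarrow> 'i set \<Rightarrow> 'c set \<Rightarrow> ('i \<Rightarrow> 'a::metric_space) \<Rightarrow> ('c \<Rightarrow> 'a) \<Rightarrow> nat \<Rightarrow> 'c set \<Rightarrow> bool" where
  "proportionally_fair \<alpha> N C xa yc k W \<longleftrightarrow>
     \<not> (\<exists>N' c. N' \<subseteq> N \<and> real (card N') \<ge> real (card N) / real k \<and> c \<in> C - W \<and>
              (\<forall>i\<in>N'. \<alpha> * dist_ac xa yc i c < dist_set xa yc i W))"

definition transferable_core ::
  "real \<Rightarrow> real \<Rightarrow> 'i set \<Rightarrow> 'c set \<Rightarrow> ('i \<Rightarrow> 'a::metric_space) \<Rightarrow> ('c \<Rightarrow> 'a) \<Rightarrow> nat \<Rightarrow> 'c set \<Rightarrow> bool" where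
  "transferable_core \<gamma> \<alpha> N C xa yc k W \<longleftrightarrow>
     \<not> (\<exists>N' c. N' \<subseteq> N \<and> real (card N') \<ge> \<gamma> * real (card N) / real k \<and> c \<in> C - W \<and>
              \<alpha> * (\<Sum>i\<in>N'. dist_ac xa yc i c) < (\<Sum>i\<in>N'. dist_set xa yc i W))"

end

theory Submission
  imports Defs
begin

lemma dist_set_le:
  assumes "finite W" "w \<in> W"
  shows "dist_set xa yc i W \<le> dist_ac xa yc i w"
  unfolding dist_set_def using assms by (intro Min_le) auto

lemma dist_set_attained:
  assumes "finite W" "W \<noteq> {}"
  shows "\<exists>w\<in>W. dist_set xa yc i W = dist_ac xa yc i w"
proof -
  have "Min ((\<lambda>c. dist_ac xa yc i c) ` W) \<in> (\<lambda>c. dist_ac xa yc i c) ` W"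
    using assms by (intro Min_in) auto
  then show ?thesis unfolding dist_set_def by auto
qed

lemma tri:
  assumes "finite W" "W \<noteq> {}"
  shows "dist_set xa yc i W \<le> dist_ac xa yc i c + dist_ac xa yc j c + dist_set xa yc j W"
proof -
  obtain w where w: "w \<in> W" "dist_set xa yc j W = dist_ac xa yc j w"
    using dist_set_attained[OF assms, where xa=xa and yc=yc and i=j] by blast
  have "dist_set xa yc i W \<le> dist_ac xa yc i w" using dist_set_le[OF assms(1) w(1)] .
  also have "\<dots> = dist (xa i) (yc w)" by (simp add: dist_ac_def)
  also have "\<dots> \<le> dist (xa i) (yc c) + dist (yc c) (xa j) + dist (xa j) (yc w)"
    by (metis add_mono_thms_linordered_semiring(3) dist_triangle order_trans)
  also have "\<dots> = dist_ac xa yc i c + dist_ac xa yc j c + dist_set xa yc j W"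
    using w by (simp add: dist_ac_def dist_commute)
  finally show ?thesis .
qed

theorem theorem3:
  fixes N :: "'i set" and C :: "'c set" and xa :: "'i \<Rightarrow> 'a::metric_space" and yc :: "'c \<Rightarrow> 'a"
    and k :: nat and W :: "'c set" and \<alpha> :: real
  assumes "finite N" and "k \<ge> 1" and "\<alpha> \<ge> 1"
    and "is_outcome C k W" and "W \<noteq> {}"
    and "proportionally_fair \<alpha> N C xa yc k W"
  shows "\<forall>\<gamma>::real. \<gamma> > 1 \<longrightarrow> transferable_core \<gamma> (\<gamma> * (\<alpha> + 1) / (\<gamma> - 1)) N C xa yc k W"
proof (intro allI impI)
  fix \<gamma> :: real assume g1: "\<gamma> > 1"
  have finW: "finite W" using assms(4) by (simp add: is_outcome_def)
  show "transferable_core \<gamma> (\<gamma> * (\<alpha> + 1) / (\<gamma> - 1)) N C xa yc k W"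
    unfolding transferable_core_def
  proof
    assume "\<exists>N' c. N' \<subseteq> N \<and> real (card N') \<ge> \<gamma> * real (card N) / real k \<and> c \<in> C - W \<and>
              \<gamma> * (\<alpha> + 1) / (\<gamma> - 1) * (\<Sum>i\<in>N'. dist_ac xa yc i c) < (\<Sum>i\<in>N'. dist_set xa yc i W)"
    then obtain N' c where N'N: "N' \<subseteq> N" and big: "real (card N') \<ge> \<gamma> * real (card N) / real k"
      and cC: "c \<in> C - W"
      and lt: "\<gamma> * (\<alpha> + 1) / (\<gamma> - 1) * (\<Sum>i\<in>N'. dist_ac xa yc i c) < (\<Sum>i\<in>N'. dist_set xa yc i W)"
      by blast
    define f where "f i = dist_ac xa yc i c" for i
    define g where "g i = dist_set xa yc i W" for i
    have f0: "f i \<ge> 0" for i by (simp add: f_def dist_ac_def)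
    have finN': "finite N'" using N'N assms(1) finite_subset by blast
    define B where "B = {i\<in>N'. \<alpha> * f i < g i}"
    define A where "A = N' - B"
    have BN': "B \<subseteq> N'" by (auto simp: B_def)
    have finB: "finite B" "finite A" using finN' by (auto simp: B_def A_def)
    have Bsmall: "\<not> (real (card B) \<ge> real (card N) / real k)"
      using assms(6) BN' N'N cC unfolding proportionally_fair_def B_def f_def g_def by blast
    define n where "n = real (card N) / real k"
    have n0: "n \<ge> 0" by (simp add: n_def)
    have bn: "real (card B) < n" using Bsmall n_def by simp
    have mg: "\<gamma> * n \<le> real (card N')" using big by (simp add: n_def)
    have cardA: "real (card A) = real (card N') - real (card B)"
      unfolding A_def using BN' finN' by (simp add: card_Diff_subset finite_subset of_nat_diff card_mono)
    have bA: "real (card B) * (\<gamma> - 1) < real (card A)"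
    proof -
      have "real (card B) * \<gamma> < n * \<gamma>" using bn g1 by simp
      also have "\<dots> \<le> real (card N')" using mg by (simp add: mult.commute)
      finally show ?thesis using cardA by (simp add: algebra_simps)
    qed
    have Ane: "A \<noteq> {}"
    proof
      assume "A = {}"
      then have "real (card B) * (\<gamma> - 1) < 0" using bA by simp
      moreover have "real (card B) * (\<gamma> - 1) \<ge> 0" using g1 by simp
      ultimately show False by simp
    qed
    obtain j where jA: "j \<in> A" and jmin: "\<forall>i\<in>A. f j \<le> f i"
      using finB(2) Ane by (metis (mono_tags) arg_min_if_finite(1) arg_min_if_finite(2) not_less)
    define D where "D = (\<Sum>i\<in>N'. f i)"
    have D0: "D \<ge> 0" unfolding D_def by (simp add: f0 sum_nonneg)
    have splitf: "D = sum f A + sum f B"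
      unfolding D_def A_def using BN' finN' by (metis sum.subset_diff)
    have splitg: "(\<Sum>i\<in>N'. g i) = sum g A + sum g B"
      unfolding A_def using BN' finN' by (metis sum.subset_diff)
    have gA: "sum g A \<le> \<alpha> * sum f A"
      unfolding sum_distrib_left by (intro sum_mono) (auto simp: A_def B_def)
    have gjA: "g j \<le> \<alpha> * f j" using jA by (auto simp: A_def B_def)
    have rfj: "real (card A) * f j \<le> D"
    proof -
      have "real (card A) * f j = (\<Sum>i\<in>A. f j)" by simp
      also have "\<dots> \<le> sum f A" using jmin by (intro sum_mono) auto
      also have "\<dots> \<le> D" using splitf by (simp add: f0 sum_nonneg)
      finally show ?thesis .
    qed
    have gB: "sum g B \<le> sum f B + real (card B) * ((1 + \<alpha>) * f j)"
    proof -
      have "sum g B \<le> (\<Sum>i\<in>B. f i + f j + g j)"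
        by (intro sum_mono) (simp add: g_def f_def tri[OF finW assms(5)])
      also have "\<dots> \<le> (\<Sum>i\<in>B. f i + (1 + \<alpha>) * f j)"
        using gjA by (intro sum_mono) (simp add: algebra_simps)
      also have "\<dots> = sum f B + real (card B) * ((1 + \<alpha>) * f j)"
        by (simp add: sum.distrib)
      finally show ?thesis .
    qed
    have key: "real (card B) * f j * (\<gamma> - 1) \<le> D"
    proof -
      have "real (card B) * (\<gamma> - 1) * f j \<le> real (card A) * f j"
        using bA f0[of j] by (intro mult_right_mono) auto
      then show ?thesis using rfj by (simp add: algebra_simps)
    qed
    have key2: "real (card B) * f j \<le> D / (\<gamma> - 1)"
      using key g1 by (simp add: field_simps)
    have sfB: "sum f B \<le> \<alpha> * sum f B"
    proof -
      have "sum f B \<ge> 0" by (simp add: f0 sum_nonneg)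
      then have "1 * sum f B \<le> \<alpha> * sum f B" using assms(3) by (intro mult_right_mono) auto
      then show ?thesis by simp
    qed
    have "(\<Sum>i\<in>N'. g i) \<le> \<alpha> * sum f A + \<alpha> * sum f B + (1 + \<alpha>) * (real (card B) * f j)"
      using splitg gA gB sfB by (simp add: algebra_simps)
    also have "\<dots> \<le> \<alpha> * D + (1 + \<alpha>) * (D / (\<gamma> - 1))"
    proof -
      have "(1 + \<alpha>) * (real (card B) * f j) \<le> (1 + \<alpha>) * (D / (\<gamma> - 1))"
        using key2 assms(3) by (intro mult_left_mono) auto
      then show ?thesis using splitf by (simp add: algebra_simps)
    qed
    also have "\<dots> = (\<alpha> * \<gamma> + 1) / (\<gamma> - 1) * D"
      using g1 by (simp add: field_simps)
    also have "\<dots> \<le> \<gamma> * (\<alpha> + 1) / (\<gamma> - 1) * D"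
      using g1 D0 by (intro mult_right_mono divide_right_mono) (auto simp: algebra_simps)
    finally show False using lt by (simp add: f_def g_def D_def)
  qed
qed

end
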